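(* In $\mathrm{Leib}$, for every $n\ge0$ and $0\le i\le j\le n$, \[\rho_i^{n+1}\rho_j^n=\rho_{j+1}^{n+1}\rho_i^n.\]
   Context: Let $\Bbbk$ be a field and $\mathbb{K}=\bigoplus_{n\in\mathbb N}\Bbbk1_n$ with $1_n1_m=\delta_{nm}1_n$. A $\mathbb K$-algebra is the categorical algebra of a small $\Bbbk$-linear category with object set $\mathbb N$. Generators: $\partial^n_j$ ($n\ge0$, $0\le j\le n$), a morphism $n\to n+1$, and $\chi^n_i$ ($n\ge1$, $0\le i\le n-1$), an endomorphism of $n$; products with mismatched degrees are $0$. $\mathrm{Mag}$: free on the $\partial^n_j$ modulo $\partial^{n+1}_i\partial^n_j=\partial^{n+1}_{j+1}\partial^n_i$ ($0\le i<j\le n$). $\mathrm{Sym}$: free on the $\chi^n_i$ modulo $\chi^n_i\chi^n_j=\chi^n_j\chi^n_i$ ($|i-j|\ge2$), $\chi^n_i\chi^n_{i+1}\chi^n_i=\chi^n_{i+1}\chi^n_i\chi^n_{i+1}$, $\chi^n_i\chi^n_i=1_n$. $\mathrm{Sym}\otimes_\zeta\mathrm{Mag}$: generated by both with underlying bimodule $\mathrm{Sym}\otimes_{\mathbb K}\mathrm{Mag}$ and relations $\partial_i^n\chi_j^n=\chi^{n+1}_{j+1}\partial^n_i$ ($i<j$), $\chi^{n+1}_{i+1}\chi^{n+1}_i\partial^n_{i+1}$ ($i=j$), $\chi^{n+1}_{i-1}\chi^{n+1}_i\partial^n_{i-1}$ ($i=j+1$), $\chi^{n+1}_j\partial^n_i$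 ($i>j+1$). $\mathrm{Leib}$ is the quotient of $\mathrm{Sym}\otimes_\zeta\mathrm{Mag}$ by the ideal generated by $\partial^{n+1}_{j+1}\partial^n_j-(1_{n+2}-\chi^{n+2}_{j+1})\partial^{n+1}_j\partial^n_j$, $0\le j\le n$. In $\mathrm{Leib}$, $\rho^n_{-1}:=0$ and $\rho^n_j:=\partial^n_j+\sum_{a=1}^j\chi^{n+1}_j\cdots\chi^{n+1}_a\partial^n_{a-1}$ for $0\le j\le n$. *)

theory Defs
  imports Main
begin

text \<open>Generators of the free K-algebra (path algebra of the quiver with vertex set nat):
  D n j is the generator \<partial>^n_j : n \<rightarrow> n+1 (valid iff j \<le> n),
  X n i is the generator \<chi>^n_i : n \<rightarrow> n (valid iff i < n, so n \<ge> 1).\<close>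

datatype gen = D nat nat | X nat nat

fun gsrc :: "gen \<Rightarrow> nat" where
  "gsrc (D n j) = n" | "gsrc (X n i) = n"

fun gtgt :: "gen \<Rightarrow> nat" where
  "gtgt (D n j) = Suc n" | "gtgt (X n i) = n"

fun gvalid :: "gen \<Rightarrow> bool" where
  "gvalid (D n j) = (j \<le> n)" | "gvalid (X n i) = (i < n)"

text \<open>A path is (source object, word); the word [g1,...,gk] denotes the product g1 g2 ... gk,
  i.e. gk is applied first. The empty word at n denotes the idempotent 1_n.\<close>

type_synonym path = "nat \<times> gen list"

fun wvalid :: "nat \<Rightarrow> gen list \<Rightarrow> bool" where
  "wvalid n [] = True"
| "wvalid n [g] = (gvalid g \<and> gsrc g = n)"
| "wvalid n (g # h # ws) = (gvalid g \<and> gsrc g = gtgt h \<and> wvalid n (h # ws))"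

fun pvalid :: "path \<Rightarrow> bool" where
  "pvalid (n, ws) = wvalid n ws"

fun ptgt :: "path \<Rightarrow> nat" where
  "ptgt (n, []) = n"
| "ptgt (n, g # ws) = gtgt g"

text \<open>Formal linear combinations of paths, their product (non-composable products are 0),
  and the element of the free algebra (coefficient function) they denote.\<close>

type_synonym 'k fl = "('k \<times> path) list"

definition fmul :: "'k::times fl \<Rightarrow> 'k fl \<Rightarrow> 'k fl" where
  "fmul xs ys = concat (map (\<lambda>(c, (n, ws)). concat (map (\<lambda>(d, (m, vs)).
      if ptgt (m, vs) = n then [(c * d, (m, ws @ vs))] else []) ys)) xs)"

definition lc :: "'k::comm_monoid_add fl \<Rightarrow> path \<Rightarrow> 'k" where
  "lc xs p = sum_list (map fst (filter (\<lambda>(c, q). q = p) xs))"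

definition mon :: "nat \<Rightarrow> gen list \<Rightarrow> 'k::one fl" where
  "mon n ws = [(1, (n, ws))]"

definition fneg :: "'k::uminus fl \<Rightarrow> 'k fl" where
  "fneg xs = map (\<lambda>(c, p). (- c, p)) xs"

inductive_set leib_rel :: "'k::field fl set" where
  mag: "i < j \<Longrightarrow> j \<le> n \<Longrightarrow>
     mon n [D (Suc n) i, D n j] @ fneg (mon n [D (Suc n) (Suc j), D n i]) \<in> leib_rel"
| sym_comm: "i < n \<Longrightarrow> j < n \<Longrightarrow> i + 2 \<le> j \<or> j + 2 \<le> i \<Longrightarrow>
     mon n [X n i, X n j] @ fneg (mon n [X n j, X n i]) \<in> leib_rel"
| sym_braid: "Suc i < n \<Longrightarrow>
     mon n [X n i, X n (Suc i), X n i] @ fneg (mon n [X n (Suc i), X n i, X n (Suc i)]) \<in> leib_rel"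
| sym_inv: "i < n \<Longrightarrow> mon n [X n i, X n i] @ fneg (mon n []) \<in> leib_rel"
| zeta1: "i < j \<Longrightarrow> j < n \<Longrightarrow>
     mon n [D n i, X n j] @ fneg (mon n [X (Suc n) (Suc j), D n i]) \<in> leib_rel"
| zeta2: "i < n \<Longrightarrow>
     mon n [D n i, X n i] @ fneg (mon n [X (Suc n) (Suc i), X (Suc n) i, D n (Suc i)]) \<in> leib_rel"
| zeta3: "j < n \<Longrightarrow>
     mon n [D n (Suc j), X n j] @ fneg (mon n [X (Suc n) j, X (Suc n) (Suc j), D n j]) \<in> leib_rel"
| zeta4: "Suc j < i \<Longrightarrow> i \<le> n \<Longrightarrow>
     mon n [D n i, X n j] @ fneg (mon n [X (Suc n) j, D n i]) \<in> leib_rel"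
| leib: "j \<le> n \<Longrightarrow>
     mon n [D (Suc n) (Suc j), D n j] @ fneg (mon n [D (Suc n) j, D n j])
       @ mon n [X (Suc (Suc n)) (Suc j), D (Suc n) j, D n j] \<in> leib_rel"

inductive_set leib_ideal :: "(path \<Rightarrow> 'k::field) set" where
  zero: "(\<lambda>_. 0) \<in> leib_ideal"
| gen: "r \<in> leib_rel \<Longrightarrow> pvalid u \<Longrightarrow> pvalid v \<Longrightarrow>
     lc (fmul [(1, u)] (fmul r [(1, v)])) \<in> leib_ideal"
| lin: "a \<in> leib_ideal \<Longrightarrow> b \<in> leib_ideal \<Longrightarrow> (\<lambda>p. a p + c * b p) \<in> leib_ideal"

definition leib_eq :: "'k::field fl \<Rightarrow> 'k fl \<Rightarrow> bool" where
  "leib_eq x y \<longleftrightarrow> lc x - lc y \<in> leib_ideal"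

definition rho :: "nat \<Rightarrow> nat \<Rightarrow> 'k::one fl" where
  "rho n j = mon n [D n j] @
     concat (map (\<lambda>a. mon n (map (X (Suc n)) (rev [a..<Suc j]) @ [D n (a - 1)])) [1..<Suc j])"

end

theory Submission
  imports Defs "HOL-Library.Function_Algebras"
begin


lemma lc_Nil[simp]: "lc [] = 0"
  by (simp add: lc_def fun_eq_iff)

lemma lc_append[simp]: "lc (x @ y) = lc x + lc y"
  by (simp add: lc_def fun_eq_iff)

lemma lc_Cons: "lc ((c, p) # x) = (\<lambda>q. if q = p then c else 0) + lc x"
  by (simp add: lc_def fun_eq_iff)

lemma lc_fneg[simp]: "lc (fneg x :: 'k::ab_group_add fl) = - lc x"
  by (induction x) (auto simp: fneg_def lc_def fun_eq_iff)

lemma fmul_Nil1[simp]: "fmul [] y = []" by (simp add: fmul_def)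
lemma fmul_Nil2[simp]: "fmul x [] = []" by (induction x) (auto simp: fmul_def)
lemma fmul_Cons1: "fmul (a # x) y = fmul [a] y @ fmul x y"
  by (simp add: fmul_def)
lemma fmul_append1[simp]: "fmul (x @ z) y = fmul x y @ fmul z y"
  by (simp add: fmul_def)
lemma fmul_Cons2_single: "fmul [a] (b # y) = fmul [a] [b] @ fmul [a] y"
  by (simp add: fmul_def split: prod.splits)
lemma fmul_append2_single: "fmul [a] (y @ z) = fmul [a] y @ fmul [a] z"
  by (simp add: fmul_def split: prod.splits)
lemma fmul_ss: "fmul [(c, (n, ws))] [(d, (m, vs))] =
   (if ptgt (m, vs) = n then [(c * d, (m, ws @ vs))] else [])"
  by (simp add: fmul_def)

lemma ptgt_app: "ptgt (k, vs) = m \<Longrightarrow> ptgt (k, ws @ vs) = ptgt (m, ws)"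
  by (cases ws) auto

lemma fmul_assoc3: "fmul (fmul [a] [b]) [c::'k::semigroup_mult \<times> path] = fmul [a] (fmul [b] [c])"
proof -
  obtain c1 n1 w1 where a: "a = (c1, n1, w1)" by (cases a) auto
  obtain c2 n2 w2 where b: "b = (c2, n2, w2)" by (cases b) auto
  obtain c3 n3 w3 where c: "c = (c3, n3, w3)" by (cases c) auto
  show ?thesis unfolding a b c
    by (simp add: fmul_ss ptgt_app mult.assoc)
qed

lemma fmul_assoc2: "fmul (fmul [a] [b]) (z::'k::semigroup_mult fl) = fmul [a] (fmul [b] z)"
proof (induction z)
  case Nil then show ?case by simp
next
  case (Cons c z)
  have "fmul (fmul [a] [b]) (c # z) = fmul (fmul [a] [b]) [c] @ fmul (fmul [a] [b]) z"
    by (cases a; cases b) (simp add: fmul_def)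
  also have "\<dots> = fmul [a] (fmul [b] [c]) @ fmul [a] (fmul [b] z)"
    using Cons fmul_assoc3 by simp
  also have "\<dots> = fmul [a] (fmul [b] (c # z))"
    by (simp only: fmul_Cons2_single[of b c z] fmul_append2_single)
  finally show ?case .
qed

lemma fmul_assoc1: "fmul (fmul [a] y) (z::'k::semigroup_mult fl) = fmul [a] (fmul y z)"
proof (induction y)
  case Nil then show ?case by simp
next
  case (Cons b y)
  show ?case
    by (simp only: fmul_Cons2_single[of a b y] fmul_Cons1[of b y z] fmul_append2_single fmul_append1 Cons fmul_assoc2)
qed

lemma fmul_assoc: "fmul (fmul x y) (z::'k::semigroup_mult fl) = fmul x (fmul y z)"
proof (induction x)
  case Nil then show ?case by simp
next
  case (Cons a x)
  have "fmul (fmul (a # x) y) z = fmul (fmul [a] y @ fmul x y) z" by (simp only: fmul_Cons1[of a x y])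
  also have "\<dots> = fmul (fmul [a] y) z @ fmul (fmul x y) z" by (rule fmul_append1)
  also have "\<dots> = fmul [a] (fmul y z) @ fmul x (fmul y z)" by (simp only: fmul_assoc1 Cons.IH)
  also have "\<dots> = fmul (a # x) (fmul y z)" by (simp only: fmul_Cons1[of a x "fmul y z"])
  finally show ?case .
qed

lemma wvalid_app: "wvalid m ws \<Longrightarrow> wvalid k vs \<Longrightarrow> ptgt (k, vs) = m \<Longrightarrow> wvalid k (ws @ vs)"
proof (induction m ws rule: wvalid.induct)
  case (1 n) then show ?case by simp
next
  case (2 n g) then show ?case by (cases vs) auto
next
  case (3 n g h ws) then show ?case by simp
qed

lemma pvalid_comp: "pvalid (m, ws) \<Longrightarrow> pvalid (k, vs) \<Longrightarrow> ptgt (k, vs) = m \<Longrightarrow> pvalid (k, ws @ vs)"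
  using wvalid_app by simp

definition Lm :: "path \<Rightarrow> (path \<Rightarrow> 'k::zero) \<Rightarrow> path \<Rightarrow> 'k" where
  "Lm w f p = (if take (length (snd w)) (snd p) = snd w \<and> ptgt (fst p, drop (length (snd w)) (snd p)) = fst w
      then f (fst p, drop (length (snd w)) (snd p)) else 0)"

definition Rm :: "path \<Rightarrow> (path \<Rightarrow> 'k::zero) \<Rightarrow> path \<Rightarrow> 'k" where
  "Rm v f p = (if fst p = fst v \<and> length (snd v) \<le> length (snd p) \<and> drop (length (snd p) - length (snd v)) (snd p) = snd v
      then f (ptgt v, take (length (snd p) - length (snd v)) (snd p)) else 0)"

lemma Lm_add: "Lm w (f + g) p = Lm w f p + (Lm w g p :: 'k::monoid_add)"
  by (simp add: Lm_def)
lemma Lm_diff: "Lm w (f - g) p = Lm w f p - (Lm w g p :: 'k::ab_group_add)"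
  by (simp add: Lm_def)
lemma Rm_add: "Rm w (f + g) p = Rm w f p + (Rm w g p :: 'k::monoid_add)"
  by (simp add: Rm_def)
lemma Rm_diff: "Rm w (f - g) p = Rm w f p - (Rm w g p :: 'k::ab_group_add)"
  by (simp add: Rm_def)

lemma split_L: "(take (length ws) zs = ws \<and> drop (length ws) zs = vs) \<longleftrightarrow> zs = ws @ vs"
  by (metis append_eq_conv_conj)

lemma split_R: "(length vs \<le> length zs \<and> drop (length zs - length vs) zs = vs \<and> take (length zs - length vs) zs = ws) \<longleftrightarrow> zs = ws @ vs"
  by (metis append_eq_conv_conj append_take_drop_id diff_add_inverse2 le_add2 length_append length_drop)

lemma lc_single: "lc [(d, q)] p = (if p = q then d else 0)"
  by (simp add: lc_def)

lemma Lm_single: "lc (fmul [(c,(m,ws))] [(d,(k,vs))]) p = c * Lm (m,ws) (lc [(d,(k,vs)) :: 'k::{comm_monoid_add,mult_zero}\<times>path]) p"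
proof (cases p)
  case (Pair k' zs)
  have "lc (fmul [(c,(m,ws))] [(d,(k,vs))]) p = (if ptgt (k,vs) = m \<and> k' = k \<and> zs = ws @ vs then c * d else 0)"
    by (simp add: fmul_ss lc_single Pair)
  also have "\<dots> = c * Lm (m,ws) (lc [(d,(k,vs))]) p"
    unfolding Lm_def lc_single Pair using split_L[of ws zs vs] by auto
  finally show ?thesis .
qed

lemma Rm_single: "lc (fmul [(d,(m,ws))] [(c,(k,vs))]) p = Rm (k,vs) (lc [(d,(m,ws)) :: 'k::{comm_monoid_add,mult_zero}\<times>path]) p * c"
proof (cases p)
  case (Pair k' zs)
  have "lc (fmul [(d,(m,ws))] [(c,(k,vs))]) p = (if ptgt (k,vs) = m \<and> k' = k \<and> zs = ws @ vs then d * c else 0)"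
    by (simp add: fmul_ss lc_single Pair)
  also have "\<dots> = Rm (k,vs) (lc [(d,(m,ws))]) p * c"
    unfolding Rm_def lc_single Pair using split_R[of vs zs ws] by auto
  finally show ?thesis .
qed

lemma lc_fmul_left: "lc (fmul [(c,w)] x) = (\<lambda>p. c * Lm w (lc x) p :: 'k::comm_semiring_0)"
proof (induction x)
  case Nil then show ?case by (simp add: Lm_def fun_eq_iff)
next
  case (Cons e x)
  obtain d k vs where e: "e = (d,k,vs)" by (cases e) auto
  obtain m ws where w: "w = (m, ws)" by (cases w) auto
  have "lc (fmul [(c,w)] (e # x)) = lc (fmul [(c,w)] [e]) + lc (fmul [(c,w)] x)"
    by (simp add: fmul_Cons2_single[of _ e x])
  also have "\<dots> = (\<lambda>p. c * Lm w (lc (e # x)) p)"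
    using Lm_single[of c m ws d k vs] Cons
  proof -
    have le: "lc ((d,k,vs) # x) = lc [(d,k,vs)] + lc x" using lc_append[of "[(d,k,vs)]" x] by simp
    show ?thesis using Lm_single[of c m ws d k vs] Cons
      by (simp only: le fun_eq_iff Lm_add distrib_left e w plus_fun_apply) simp
  qed
  finally show ?case .
qed

lemma lc_fmul_right: "lc (fmul x [(c,v)]) = (\<lambda>p. Rm v (lc x) p * c :: 'k::comm_semiring_0)"
proof (induction x)
  case Nil then show ?case by (simp add: Rm_def fun_eq_iff)
next
  case (Cons e x)
  obtain d k vs where e: "e = (d,k,vs)" by (cases e) auto
  obtain m ws where v: "v = (m, ws)" by (cases v) auto
  have "lc (fmul (e # x) [(c,v)]) = lc (fmul [e] [(c,v)]) + lc (fmul x [(c,v)])"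
    by (simp add: fmul_Cons1[of e x])
  also have "\<dots> = (\<lambda>p. Rm v (lc (e # x)) p * c)"
  proof -
    have le: "lc ((d,k,vs) # x) = lc [(d,k,vs)] + lc x" using lc_append[of "[(d,k,vs)]" x] by simp
    show ?thesis using Rm_single[of d k vs c m ws] Cons
      by (simp only: le fun_eq_iff Rm_add distrib_right e v plus_fun_apply) simp
  qed
  finally show ?case .
qed

abbreviation II where "II \<equiv> leib_ideal"

lemma I0[simp]: "0 \<in> leib_ideal"
  using leib_ideal.zero by (simp add: zero_fun_def)

lemma I_add: "a \<in> leib_ideal \<Longrightarrow> b \<in> leib_ideal \<Longrightarrow> a + b \<in> leib_ideal"
  using leib_ideal.lin[of a b 1] by (simp add: plus_fun_def)

lemma I_scale: "b \<in> leib_ideal \<Longrightarrow> (\<lambda>p. c * b p) \<in> leib_ideal"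
  using leib_ideal.lin[OF leib_ideal.zero, of b c] by simp

lemma I_diff: "a \<in> leib_ideal \<Longrightarrow> b \<in> (leib_ideal :: (path \<Rightarrow> 'k::field) set) \<Longrightarrow> a - b \<in> leib_ideal"
  using leib_ideal.lin[of a b "-1"] by (simp add: fun_diff_def)

lemma I_neg: "b \<in> (leib_ideal :: (path \<Rightarrow> 'k::field) set) \<Longrightarrow> - b \<in> leib_ideal"
  using I_diff[OF I0, of b] by simp

lemma fmul_one_one: "fmul [(1::'k::monoid_mult, (m, ws))] [(1, (k, vs))] =
   (if ptgt (k, vs) = m then [(1, (k, ws @ vs))] else [])"
  by (simp add: fmul_ss)

lemma Lm_I: "a \<in> leib_ideal \<Longrightarrow> pvalid w \<Longrightarrow> Lm w a \<in> (leib_ideal :: (path \<Rightarrow> 'k::field) set)"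
proof (induction rule: leib_ideal.induct)
  case zero
  have "Lm w (\<lambda>_. 0::'k) = (\<lambda>_. 0)" by (simp add: Lm_def fun_eq_iff)
  then show ?case using leib_ideal.zero by simp
next
  case (gen r u v)
  obtain m ws where w: "w = (m, ws)" by (cases w) auto
  obtain k us where u: "u = (k, us)" by (cases u) auto
  have "Lm w (lc (fmul [(1, u)] (fmul r [(1, v)]))) = lc (fmul [(1::'k, w)] (fmul [(1, u)] (fmul r [(1, v)])))"
    by (simp add: lc_fmul_left)
  also have "\<dots> = lc (fmul (fmul [(1::'k, w)] [(1, u)]) (fmul r [(1, v)]))"
    by (simp add: fmul_assoc)
  finally have eq: "Lm w (lc (fmul [(1, u)] (fmul r [(1, v)]))) = \<dots>" .
  show ?case
  proof (cases "ptgt (k, us) = m")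
    case True
    have "pvalid (k, ws @ us)" using pvalid_comp gen True w u by auto
    then show ?thesis using eq True leib_ideal.gen[OF gen(1) _ gen(3)] by (simp add: w u fmul_one_one)
  next
    case False
    then show ?thesis using eq leib_ideal.zero by (simp add: w u fmul_one_one)
  qed
next
  case (lin a b c)
  have "Lm w (\<lambda>p. a p + c * b p) = (\<lambda>p. Lm w a p + c * Lm w b p)" by (simp add: Lm_def fun_eq_iff)
  then show ?case using leib_ideal.lin[OF lin.IH(1)[OF lin.prems] lin.IH(2)[OF lin.prems], of c] by (simp only:)
qed

lemma Rm_I: "a \<in> leib_ideal \<Longrightarrow> pvalid w \<Longrightarrow> Rm w a \<in> (leib_ideal :: (path \<Rightarrow> 'k::field) set)"
proof (induction rule: leib_ideal.induct)
  case zero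
  have "Rm w (\<lambda>_. 0::'k) = (\<lambda>_. 0)" by (simp add: Rm_def fun_eq_iff)
  then show ?case using leib_ideal.zero by simp
next
  case (gen r u v)
  obtain m ws where v: "v = (m, ws)" by (cases v) auto
  obtain k us where w: "w = (k, us)" by (cases w) auto
  have "Rm w (lc (fmul [(1, u)] (fmul r [(1, v)]))) = lc (fmul (fmul [(1, u)] (fmul r [(1, v)])) [(1::'k, w)])"
    by (simp add: lc_fmul_right)
  also have "\<dots> = lc (fmul [(1, u)] (fmul r (fmul [(1, v)] [(1::'k, w)])))"
    by (simp add: fmul_assoc)
  finally have eq: "Rm w (lc (fmul [(1, u)] (fmul r [(1, v)]))) = \<dots>" .
  show ?case
  proof (cases "ptgt (k, us) = m")
    case True
    have "pvalid (k, ws @ us)" using pvalid_comp gen True w v by auto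
    then show ?thesis using eq True leib_ideal.gen[OF gen(1) gen(2)] by (simp add: w v fmul_one_one)
  next
    case False
    then show ?thesis using eq leib_ideal.zero by (simp add: w v fmul_one_one)
  qed
next
  case (lin a b c)
  have "Rm w (\<lambda>p. a p + c * b p) = (\<lambda>p. Rm w a p + c * Rm w b p)" by (simp add: Rm_def fun_eq_iff)
  then show ?case using leib_ideal.lin[OF lin.IH(1)[OF lin.prems] lin.IH(2)[OF lin.prems], of c] by (simp only:)
qed

definition fvalid :: "'k fl \<Rightarrow> bool" where
  "fvalid z \<longleftrightarrow> (\<forall>e \<in> set z. pvalid (snd e))"

lemma fvalid_Nil[simp]: "fvalid []" by (simp add: fvalid_def)
lemma fvalid_append[simp]: "fvalid (x @ y) \<longleftrightarrow> fvalid x \<and> fvalid y" by (auto simp: fvalid_def)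
lemma fvalid_mon[simp]: "fvalid (mon n ws) \<longleftrightarrow> wvalid n ws" by (simp add: fvalid_def mon_def)

lemma fvalid_fmul_ss: "pvalid p \<Longrightarrow> pvalid q \<Longrightarrow> fvalid (fmul [(c,p)] [(d,q)])"
proof -
  obtain m ws where p: "p = (m, ws)" by (cases p) auto
  obtain k vs where q: "q = (k, vs)" by (cases q) auto
  assume "pvalid p" "pvalid q"
  then show ?thesis unfolding p q fmul_ss fvalid_def using pvalid_comp[of m ws k vs] by simp
qed

lemma fvalid_Cons: "fvalid (e # x) \<longleftrightarrow> pvalid (snd e) \<and> fvalid x" by (simp add: fvalid_def)

lemma fvalid_fmul1: "pvalid (snd a) \<Longrightarrow> fvalid y \<Longrightarrow> fvalid (fmul [a] y)"
proof (induction y)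
  case Nil then show ?case by simp
next
  case (Cons b y)
  obtain c p where a: "a = (c, p)" by (cases a) auto
  obtain d q where b: "b = (d, q)" by (cases b) auto
  have "fvalid (fmul [a] [b])" using Cons.prems fvalid_fmul_ss[of p q c d] by (simp add: a b fvalid_Cons)
  moreover have "fvalid (fmul [a] y)" using Cons by (simp add: fvalid_Cons)
  ultimately show ?case by (simp only: fmul_Cons2_single[of a b y] fvalid_append)
qed

lemma fvalid_fmul: "fvalid x \<Longrightarrow> fvalid y \<Longrightarrow> fvalid (fmul x y)"
proof (induction x)
  case Nil then show ?case by simp
next
  case (Cons a x)
  have "fvalid (fmul [a] y)" using Cons.prems by (auto simp: fvalid_Cons intro: fvalid_fmul1)
  moreover have "fvalid (fmul x y)" using Cons by (simp add: fvalid_Cons)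
  ultimately show ?case by (simp only: fmul_Cons1[of a x y] fvalid_append)
qed

lemma leib_eq_refl[simp]: "leib_eq x x" by (simp add: leib_eq_def)
lemma leib_eq_sym: "leib_eq x y \<Longrightarrow> leib_eq y x"
proof -
  assume "leib_eq x y"
  then have "- (lc x - lc y) \<in> leib_ideal" unfolding leib_eq_def by (rule I_neg)
  then show ?thesis unfolding leib_eq_def by simp
qed
lemma leib_eq_trans[trans]: "leib_eq x y \<Longrightarrow> leib_eq y z \<Longrightarrow> leib_eq x z"
proof -
  assume a: "leib_eq x y" "leib_eq y z"
  have "(lc x - lc y) + (lc y - lc z) \<in> leib_ideal" using a unfolding leib_eq_def by (rule I_add)
  then show ?thesis unfolding leib_eq_def by simp
qed
lemma leib_eq_lc: "lc x = lc y \<Longrightarrow> leib_eq x y" by (simp add: leib_eq_def)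
lemma leib_eq_app: "leib_eq x x' \<Longrightarrow> leib_eq y y' \<Longrightarrow> leib_eq (x @ y) (x' @ y')"
proof -
  assume a: "leib_eq x x'" "leib_eq y y'"
  have "(lc x - lc x') + (lc y - lc y') \<in> leib_ideal" using a unfolding leib_eq_def by (rule I_add)
  moreover have "(lc x - lc x') + (lc y - lc y') = lc (x @ y) - lc (x' @ y')" by (simp add: algebra_simps)
  ultimately show ?thesis unfolding leib_eq_def by simp
qed

lemma leib_eq_mul_left: "fvalid z \<Longrightarrow> leib_eq x y \<Longrightarrow> leib_eq (fmul z x) (fmul (z::'k::field fl) y)"
proof (induction z)
  case Nil then show ?case by simp
next
  case (Cons e z)
  obtain c w where e: "e = (c, w)" by (cases e) auto
  have "lc (fmul [e] x) - lc (fmul [e] y) = (\<lambda>p. c * Lm w (lc x - lc y) p)"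
    by (simp add: e lc_fmul_left fun_eq_iff Lm_diff right_diff_distrib)
  moreover have "pvalid w" using Cons.prems by (simp add: fvalid_def e)
  ultimately have "leib_eq (fmul [e] x) (fmul [e] y)"
    unfolding leib_eq_def using I_scale[OF Lm_I[OF Cons.prems(2)[unfolded leib_eq_def]]] by simp
  moreover have "leib_eq (fmul z x) (fmul z y)" using Cons by (simp add: fvalid_def)
  ultimately show ?case using leib_eq_app by (metis fmul_Cons1)
qed

lemma add_diff_add4: "(a::'a::ab_group_add) + b - (c + d) = (a - c) + (b - d)"
  by (simp add: algebra_simps)

lemma lc_fmul_Cons2: "lc (fmul x (e # z)) = lc (fmul x [e]) + lc (fmul x z)"
proof (induction x)
  case Nil then show ?case by simp
next
  case (Cons a x)
  have "lc (fmul (a # x) (e # z)) = lc (fmul [a] [e]) + lc (fmul [a] z) + lc (fmul x (e # z))"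
    by (simp only: fmul_Cons1[of a x] fmul_Cons2_single[of a e z] lc_append)
  also have "\<dots> = (lc (fmul [a] [e]) + lc (fmul x [e])) + (lc (fmul [a] z) + lc (fmul x z))"
    using Cons by (simp only: add_ac)
  also have "\<dots> = lc (fmul (a # x) [e]) + lc (fmul (a # x) z)"
    by (simp only: fmul_Cons1[of a x] lc_append)
  finally show ?case .
qed

lemma mdiff_aux: "(a::'a::comm_ring) * c - b * c = c * (a - b)"
  by (simp add: algebra_simps)

lemma leib_eq_mul_right: "fvalid z \<Longrightarrow> leib_eq x y \<Longrightarrow> leib_eq (fmul x z) (fmul y (z::'k::field fl))"
proof (induction z)
  case Nil then show ?case by simp
next
  case (Cons e z)
  obtain c w where e: "e = (c, w)" by (cases e) auto
  have "lc (fmul x [e]) - lc (fmul y [e]) = (\<lambda>p. c * Rm w (lc x - lc y) p)"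
    unfolding e lc_fmul_right fun_eq_iff Rm_diff by (simp only: fun_diff_def mdiff_aux) simp
  moreover have "pvalid w" using Cons.prems by (simp add: fvalid_def e)
  ultimately have "leib_eq (fmul x [e]) (fmul y [e])"
    unfolding leib_eq_def using I_scale[OF Rm_I[OF Cons.prems(2)[unfolded leib_eq_def]]] by simp
  moreover have "leib_eq (fmul x z) (fmul y z)" using Cons.IH Cons.prems by (simp add: fvalid_Cons)
  moreover have "lc (fmul x (e#z)) - lc (fmul y (e#z)) = (lc (fmul x [e]) - lc (fmul y [e])) + (lc (fmul x z) - lc (fmul y z))"
    by (simp only: lc_fmul_Cons2[of x e z] lc_fmul_Cons2[of y e z] add_diff_add4)
  ultimately show ?case unfolding leib_eq_def using I_add by simp
qed

lemma lc_cong_left: "lc x = lc y \<Longrightarrow> lc (fmul z x) = lc (fmul (z::'k::comm_semiring_0 fl) y)"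
proof (induction z)
  case Nil then show ?case by simp
next
  case (Cons e z)
  obtain c w where e: "e = (c, w)" by (cases e) auto
  show ?case using Cons unfolding e by (simp add: fmul_Cons1[of "(c,w)" z] lc_fmul_left)
qed

lemma lc_cong_right: "lc x = lc y \<Longrightarrow> lc (fmul x z) = lc (fmul y (z::'k::comm_semiring_0 fl))"
proof (induction z)
  case Nil then show ?case by simp
next
  case (Cons e z)
  obtain c w where e: "e = (c, w)" by (cases e) auto
  show ?case using Cons unfolding e by (simp add: lc_fmul_Cons2[of x "(c,w)" z] lc_fmul_Cons2[of y "(c,w)" z] lc_fmul_right)
qed

section \<open>Relators\<close>

lemma fmul_id_r: "(\<forall>e \<in> set r. fst (snd e) = n \<and> ptgt (snd e) = t) \<Longrightarrow>
   fmul [(1::'k::monoid_mult, (t, []))] (fmul r [(1, (n, []))]) = r"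
proof (induction r)
  case Nil then show ?case by simp
next
  case (Cons e r)
  obtain c m ws where e: "e = (c, m, ws)" by (cases e) auto
  have "fmul (e # r) [(1, (n, []))] = fmul [e] [(1, (n, []))] @ fmul r [(1, (n, []))]"
    by (rule fmul_Cons1)
  moreover have "fmul [(1, (t, []))] ((c, m, ws) # fmul r [(1, (n, []))]) = fmul [(1, (t, []))] [(c, m, ws)] @ fmul [(1, (t, []))] (fmul r [(1, (n, []))])"
    by (rule fmul_Cons2_single)
  ultimately show ?case using Cons by (auto simp: e fmul_ss)
qed

lemma rel_lc: "r \<in> leib_rel \<Longrightarrow> (\<forall>e \<in> set r. fst (snd e) = n \<and> ptgt (snd e) = t) \<Longrightarrow> lc r \<in> leib_ideal"
  using leib_ideal.gen[of r "(t, [])" "(n, [])"] fmul_id_r[of r n t] by simp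

lemma rel2: "A @ fneg B \<in> leib_rel \<Longrightarrow> (\<forall>e \<in> set (A @ fneg B). fst (snd e) = n \<and> ptgt (snd e) = t) \<Longrightarrow> leib_eq A B"
  using rel_lc[of "A @ fneg B" n t] by (simp add: leib_eq_def)

lemma rel3: "A @ fneg B @ C \<in> leib_rel \<Longrightarrow> (\<forall>e \<in> set (A @ fneg B @ C). fst (snd e) = n \<and> ptgt (snd e) = t) \<Longrightarrow> leib_eq (A @ C) B"
  using rel_lc[of "A @ fneg B @ C" n t] by (simp add: leib_eq_def algebra_simps)

lemma r_mag: "i < j \<Longrightarrow> j \<le> n \<Longrightarrow> leib_eq (mon n [D (Suc n) i, D n j] :: 'k::field fl) (mon n [D (Suc n) (Suc j), D n i])"
  by (rule rel2[OF leib_rel.mag, of _ _ _ n "Suc (Suc n)"]) (auto simp: mon_def fneg_def)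

lemma r_comm: "i < n \<Longrightarrow> j < n \<Longrightarrow> i + 2 \<le> j \<or> j + 2 \<le> i \<Longrightarrow> leib_eq (mon n [X n i, X n j] :: 'k::field fl) (mon n [X n j, X n i])"
  by (rule rel2[OF leib_rel.sym_comm, of _ _ _ n n]) (auto simp: mon_def fneg_def)

lemma r_braid: "Suc i < n \<Longrightarrow> leib_eq (mon n [X n i, X n (Suc i), X n i] :: 'k::field fl) (mon n [X n (Suc i), X n i, X n (Suc i)])"
  by (rule rel2[OF leib_rel.sym_braid, of _ _ n n]) (auto simp: mon_def fneg_def)

lemma r_inv: "i < n \<Longrightarrow> leib_eq (mon n [X n i, X n i] :: 'k::field fl) (mon n [])"
  by (rule rel2[OF leib_rel.sym_inv, of _ _ n n]) (auto simp: mon_def fneg_def)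

lemma r_z1: "i < j \<Longrightarrow> j < n \<Longrightarrow> leib_eq (mon n [D n i, X n j] :: 'k::field fl) (mon n [X (Suc n) (Suc j), D n i])"
  by (rule rel2[OF leib_rel.zeta1, of _ _ _ n "Suc n"]) (auto simp: mon_def fneg_def)

lemma r_z2: "i < n \<Longrightarrow> leib_eq (mon n [D n i, X n i] :: 'k::field fl) (mon n [X (Suc n) (Suc i), X (Suc n) i, D n (Suc i)])"
  by (rule rel2[OF leib_rel.zeta2, of _ _ n "Suc n"]) (auto simp: mon_def fneg_def)

lemma r_z3: "j < n \<Longrightarrow> leib_eq (mon n [D n (Suc j), X n j] :: 'k::field fl) (mon n [X (Suc n) j, X (Suc n) (Suc j), D n j])"
  by (rule rel2[OF leib_rel.zeta3, of _ _ n "Suc n"]) (auto simp: mon_def fneg_def)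

lemma r_z4: "Suc j < i \<Longrightarrow> i \<le> n \<Longrightarrow> leib_eq (mon n [D n i, X n j] :: 'k::field fl) (mon n [X (Suc n) j, D n i])"
  by (rule rel2[OF leib_rel.zeta4, of _ _ _ n "Suc n"]) (auto simp: mon_def fneg_def)

lemma r_leib: "j \<le> n \<Longrightarrow> leib_eq (mon n [D (Suc n) (Suc j), D n j] @ mon n [X (Suc (Suc n)) (Suc j), D (Suc n) j, D n j] :: 'k::field fl)
     (mon n [D (Suc n) j, D n j])"
  by (rule rel3[OF leib_rel.leib, of _ _ n "Suc (Suc n)"]) (auto simp: mon_def fneg_def)

section \<open>Normalisation\<close>

lemma fmul_mm[simp]: "fmul (mon a ws) (mon b vs :: 'k::monoid_mult fl) = (if ptgt (b, vs) = a then mon b (ws @ vs) else [])"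
  by (simp add: mon_def fmul_ss)

lemma fmul_mm_assoc[simp]: "fmul (mon a ws) (fmul (mon b vs) (z :: 'k::monoid_mult fl)) = (if ptgt (b, vs) = a then fmul (mon b (ws @ vs)) z else [])"
  by (simp only: fmul_assoc[symmetric] fmul_mm) simp

lemma fmul_mon_app[simp]: "fmul (mon a ws) (y @ z) = fmul (mon a ws) y @ fmul (mon a ws) z"
  by (simp add: mon_def fmul_append2_single)

lemma lc_fmul_app2: "lc (fmul x (y @ z)) = lc (fmul x y) + lc (fmul x (z :: 'k::comm_semiring_0 fl))"
proof (induction y)
  case Nil then show ?case by simp
next
  case (Cons e y)
  have "lc (fmul x ((e # y) @ z)) = lc (fmul x [e]) + lc (fmul x (y @ z))"
    by (simp only: append_Cons lc_fmul_Cons2[of x e "y @ z"])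
  also have "\<dots> = lc (fmul x [e]) + lc (fmul x y) + lc (fmul x z)" by (simp only: Cons.IH add_ac)
  also have "\<dots> = lc (fmul x (e # y)) + lc (fmul x z)" by (simp only: lc_fmul_Cons2[of x e y])
  finally show ?case .
qed

lemma lc_fmul_app2_2: "lc (fmul u (fmul x (y @ z))) = lc (fmul u (fmul x y)) + lc (fmul u (fmul x (z :: 'k::comm_semiring_0 fl)))"
  by (simp only: fmul_assoc[symmetric] lc_fmul_app2)

lemma lc_fmul_app2_3: "lc (fmul u (fmul v (fmul x (y @ z)))) = lc (fmul u (fmul v (fmul x y))) + lc (fmul u (fmul v (fmul x (z :: 'k::comm_semiring_0 fl))))"
  by (simp only: fmul_assoc[symmetric] lc_fmul_app2)

lemmas nf = lc_append fmul_append1 fmul_assoc lc_fmul_app2 lc_fmul_app2_2 lc_fmul_app2_3 add_ac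

lemma step0: "leib_eq x y \<Longrightarrow> lc A = lc (z @ x) \<Longrightarrow> lc B = lc (z @ y) \<Longrightarrow> leib_eq A B"
  by (meson leib_eq_app leib_eq_lc leib_eq_refl leib_eq_sym leib_eq_trans)

lemma stepL: "leib_eq x y \<Longrightarrow> fvalid u \<Longrightarrow> lc A = lc (z @ fmul u x) \<Longrightarrow> lc B = lc (z @ fmul u y) \<Longrightarrow> leib_eq A (B :: 'k::field fl)"
  by (meson step0 leib_eq_mul_left)

lemma stepR: "leib_eq x y \<Longrightarrow> fvalid v \<Longrightarrow> lc A = lc (z @ fmul x v) \<Longrightarrow> lc B = lc (z @ fmul y v) \<Longrightarrow> leib_eq A (B :: 'k::field fl)"
  by (meson step0 leib_eq_mul_right)

lemma stepLR: "leib_eq x y \<Longrightarrow> fvalid u \<Longrightarrow> fvalid v \<Longrightarrow> lc A = lc (z @ fmul u (fmul x v)) \<Longrightarrow> lc B = lc (z @ fmul u (fmul y v)) \<Longrightarrow> leib_eq A (B :: 'k::field fl)"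
  by (meson step0 leib_eq_mul_right leib_eq_mul_left)



fun R :: "nat \<Rightarrow> nat \<Rightarrow> 'k::monoid_mult fl" where
  "R n 0 = []"
| "R n (Suc j) = mon n [D n j] @ fmul (mon (Suc n) [X (Suc n) j]) (R n j)"

lemmas R_Suc = R.simps(2)
declare R.simps(2)[simp del]

lemma fvalid_R[simp]: "j \<le> Suc n \<Longrightarrow> fvalid (R n j)"
proof (induction j)
  case 0 then show ?case by simp
next
  case (Suc j) then show ?case by (simp add: R_Suc fvalid_fmul)
qed

lemma lemE: "k \<le> i \<Longrightarrow> i < n \<Longrightarrow>
  leib_eq (fmul (R n k) (mon n [X n i])) (fmul (mon (Suc n) [X (Suc n) (Suc i)]) (R n k) :: 'k::field fl)"
proof (induction k)
  case 0 show ?case by simp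
next
  case (Suc k)
  then have ki: "k < i" by simp
  have ih: "leib_eq (fmul (R n k) (mon n [X n i])) (fmul (mon (Suc n) [X (Suc n) (Suc i)]) (R n k) :: 'k fl)"
    using Suc by simp
  let ?x = "mon (Suc n) [X (Suc n) k] :: 'k fl"
  let ?z = "mon n [X (Suc n) (Suc i), D n k] :: 'k fl"
  have "leib_eq (fmul (R n (Suc k)) (mon n [X n i])) (?z @ fmul ?x (fmul (R n k) (mon n [X n i])))"
    by (rule step0[OF r_z1[of k i n], where z = "fmul ?x (fmul (R n k) (mon n [X n i]))"])
       (use Suc in \<open>simp_all add: R_Suc nf\<close>)
  also have "leib_eq \<dots> (?z @ fmul ?x (fmul (mon (Suc n) [X (Suc n) (Suc i)]) (R n k)))"
    by (rule stepL[OF ih, where u = ?x and z = ?z]) (use Suc in \<open>simp_all add: nf\<close>)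
  also have "leib_eq \<dots> (?z @ fmul (mon (Suc n) [X (Suc n) (Suc i), X (Suc n) k]) (R n k))"
    by (rule stepR[OF r_comm[of k "Suc n" "Suc i"], where v = "R n k" and z = ?z]) (use Suc in \<open>simp_all add: nf\<close>)
  also have "leib_eq \<dots> (fmul (mon (Suc n) [X (Suc n) (Suc i)]) (R n (Suc k)))"
    by (rule leib_eq_lc) (simp add: nf R_Suc)
  finally show ?case .
qed

lemma lemD: "k \<le> m \<Longrightarrow> m \<le> n \<Longrightarrow>
  leib_eq (fmul (mon (Suc n) [D (Suc n) (Suc m)]) (R n k)) (fmul (R (Suc n) k) (mon n [D n m]) :: 'k::field fl)"
proof (induction k)
  case 0 show ?case by simp
next
  case (Suc k)
  have ih: "leib_eq (fmul (mon (Suc n) [D (Suc n) (Suc m)]) (R n k)) (fmul (R (Suc n) k) (mon n [D n m]) :: 'k fl)"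
    using Suc by simp
  let ?z = "mon n [D (Suc n) k, D n m] :: 'k fl"
  have "leib_eq (fmul (mon (Suc n) [D (Suc n) (Suc m)]) (R n (Suc k)))
     (?z @ fmul (mon (Suc n) [D (Suc n) (Suc m), X (Suc n) k]) (R n k))"
    by (rule step0[OF leib_eq_sym[OF r_mag[of k m n]], where z = "fmul (mon (Suc n) [D (Suc n) (Suc m), X (Suc n) k]) (R n k)"])
       (use Suc in \<open>simp_all add: R_Suc nf\<close>)
  also have "leib_eq \<dots> (?z @ fmul (mon (Suc n) [X (Suc (Suc n)) k, D (Suc n) (Suc m)]) (R n k))"
    by (rule stepR[OF r_z4[of k "Suc m" "Suc n"], where v = "R n k" and z = ?z]) (use Suc in \<open>simp_all add: nf\<close>)
  also have "leib_eq \<dots> (?z @ fmul (mon (Suc (Suc n)) [X (Suc (Suc n)) k]) (fmul (R (Suc n) k) (mon n [D n m])))"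
    by (rule stepL[OF ih, where u = "mon (Suc (Suc n)) [X (Suc (Suc n)) k]" and z = ?z]) (use Suc in \<open>simp_all add: nf\<close>)
  also have "leib_eq \<dots> (fmul (R (Suc n) (Suc k)) (mon n [D n m]))"
    by (rule leib_eq_lc) (simp add: nf R_Suc)
  finally show ?case .
qed

lemma lemC: "Suc i \<le> k \<Longrightarrow> k \<le> n \<Longrightarrow>
  leib_eq (fmul (R n (Suc k)) (mon n [X n i])) (fmul (mon (Suc n) [X (Suc n) i]) (R n (Suc k)) :: 'k::field fl)"
proof (induction k)
  case 0 then show ?case by simp
next
  case (Suc k)
  show ?case
  proof (cases "k = i")
    case True
    then have k: "k = i" and iN: "i < n" using Suc by auto
    let ?A = "mon n [X (Suc n) (Suc i), D n i, X n i] @ fmul (mon (Suc n) [X (Suc n) (Suc i), X (Suc n) i]) (fmul (R n i) (mon n [X n i])) :: 'k fl"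
    let ?B = "mon n [X (Suc n) i, X (Suc n) (Suc i), D n i] :: 'k fl"
    have "leib_eq (fmul (R n (Suc (Suc i))) (mon n [X n i])) (?A @ ?B)"
      by (rule step0[OF r_z3[of i n], where z = ?A]) (use iN in \<open>simp_all add: R_Suc nf\<close>)
    also have "leib_eq \<dots> (fmul (mon (Suc n) [X (Suc n) (Suc i)]) (mon n [X (Suc n) (Suc i), X (Suc n) i, D n (Suc i)])
       @ fmul (mon (Suc n) [X (Suc n) (Suc i), X (Suc n) i]) (fmul (R n i) (mon n [X n i])) @ ?B)"
      by (rule stepL[OF r_z2[of i n], where u = "mon (Suc n) [X (Suc n) (Suc i)]"
            and z = "fmul (mon (Suc n) [X (Suc n) (Suc i), X (Suc n) i]) (fmul (R n i) (mon n [X n i])) @ ?B"])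
         (use iN in \<open>simp_all add: nf\<close>)
    also have "leib_eq \<dots> (mon n [X (Suc n) i, D n (Suc i)]
       @ fmul (mon (Suc n) [X (Suc n) (Suc i), X (Suc n) i]) (fmul (R n i) (mon n [X n i])) @ ?B)"
      by (rule stepR[OF r_inv[of "Suc i" "Suc n"], where v = "mon n [X (Suc n) i, D n (Suc i)]"
            and z = "fmul (mon (Suc n) [X (Suc n) (Suc i), X (Suc n) i]) (fmul (R n i) (mon n [X n i])) @ ?B"])
         (use iN in \<open>simp_all add: nf\<close>)
    also have "leib_eq \<dots> (mon n [X (Suc n) i, D n (Suc i)]
       @ fmul (mon (Suc n) [X (Suc n) (Suc i), X (Suc n) i]) (fmul (mon (Suc n) [X (Suc n) (Suc i)]) (R n i)) @ ?B)"
      by (rule stepL[OF lemE[of i i n], where u = "mon (Suc n) [X (Suc n) (Suc i), X (Suc n) i]"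
            and z = "mon n [X (Suc n) i, D n (Suc i)] @ ?B"])
         (use iN in \<open>simp_all add: nf\<close>)
    also have "leib_eq \<dots> (mon n [X (Suc n) i, D n (Suc i)]
       @ fmul (mon (Suc n) [X (Suc n) i, X (Suc n) (Suc i), X (Suc n) i]) (R n i) @ ?B)"
      by (rule stepR[OF leib_eq_sym[OF r_braid[of i "Suc n"]], where v = "R n i"
            and z = "mon n [X (Suc n) i, D n (Suc i)] @ ?B"])
         (use iN in \<open>simp_all add: nf\<close>)
    also have "leib_eq \<dots> (fmul (mon (Suc n) [X (Suc n) i]) (R n (Suc (Suc i))))"
      by (rule leib_eq_lc) (simp add: nf R_Suc)
    finally show ?thesis using k by simp
  next
    case False
    then have ik: "Suc i \<le> k" and kn: "Suc k \<le> n" using Suc by auto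
    have ih: "leib_eq (fmul (R n (Suc k)) (mon n [X n i])) (fmul (mon (Suc n) [X (Suc n) i]) (R n (Suc k)) :: 'k fl)"
      using Suc.IH ik kn by simp
    let ?z = "mon n [X (Suc n) i, D n (Suc k)] :: 'k fl"
    have "leib_eq (fmul (R n (Suc (Suc k))) (mon n [X n i]))
       (?z @ fmul (mon (Suc n) [X (Suc n) (Suc k)]) (fmul (R n (Suc k)) (mon n [X n i])))"
      by (rule step0[OF r_z4[of i "Suc k" n], where z = "fmul (mon (Suc n) [X (Suc n) (Suc k)]) (fmul (R n (Suc k)) (mon n [X n i]))"])
         (use ik kn in \<open>simp_all add: R_Suc[of n "Suc k"] nf\<close>)
    also have "leib_eq \<dots> (?z @ fmul (mon (Suc n) [X (Suc n) (Suc k)]) (fmul (mon (Suc n) [X (Suc n) i]) (R n (Suc k))))"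
      by (rule stepL[OF ih, where u = "mon (Suc n) [X (Suc n) (Suc k)]" and z = ?z]) (use ik kn in \<open>simp_all add: nf\<close>)
    also have "leib_eq \<dots> (?z @ fmul (mon (Suc n) [X (Suc n) i, X (Suc n) (Suc k)]) (R n (Suc k)))"
      by (rule stepR[OF r_comm[of "Suc k" "Suc n" i], where v = "R n (Suc k)" and z = ?z]) (use ik kn in \<open>simp_all add: nf\<close>)
    also have "leib_eq \<dots> (fmul (mon (Suc n) [X (Suc n) i]) (R n (Suc (Suc k))))"
      by (rule leib_eq_lc) (simp add: nf R_Suc[of n "Suc k"])
    finally show ?thesis .
  qed
qed

lemma lemB: "i \<le> j \<Longrightarrow> j \<le> n \<Longrightarrow>
  leib_eq (fmul (mon (Suc n) [D (Suc n) i]) (R n (Suc j))) (fmul (R (Suc n) (Suc (Suc j))) (mon n [D n i]) :: 'k::field fl)"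
proof (induction j arbitrary: i)
  case 0
  then have i: "i = 0" by simp
  show ?case unfolding i
    by (rule step0[OF leib_eq_sym[OF r_leib[of 0 n]], where z = "[]"]) (simp_all add: nf R_Suc)
next
  case (Suc j)
  show ?case
  proof (cases "i \<le> j")
    case True
    have ih: "leib_eq (fmul (mon (Suc n) [D (Suc n) i]) (R n (Suc j))) (fmul (R (Suc n) (Suc (Suc j))) (mon n [D n i]) :: 'k fl)"
      using Suc True by simp
    let ?z = "mon n [D (Suc n) (Suc (Suc j)), D n i] :: 'k fl"
    have "leib_eq (fmul (mon (Suc n) [D (Suc n) i]) (R n (Suc (Suc j))))
       (?z @ fmul (mon (Suc n) [D (Suc n) i, X (Suc n) (Suc j)]) (R n (Suc j)))"
      by (rule step0[OF r_mag[of i "Suc j" n], where z = "fmul (mon (Suc n) [D (Suc n) i, X (Suc n) (Suc j)]) (R n (Suc j))"])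
         (use Suc True in \<open>simp_all add: R_Suc[of n "Suc j"] nf\<close>)
    also have "leib_eq \<dots> (?z @ fmul (mon (Suc n) [X (Suc (Suc n)) (Suc (Suc j)), D (Suc n) i]) (R n (Suc j)))"
      by (rule stepR[OF r_z1[of i "Suc j" "Suc n"], where v = "R n (Suc j)" and z = ?z]) (use Suc True in \<open>simp_all add: nf\<close>)
    also have "leib_eq \<dots> (?z @ fmul (mon (Suc (Suc n)) [X (Suc (Suc n)) (Suc (Suc j))]) (fmul (R (Suc n) (Suc (Suc j))) (mon n [D n i])))"
      by (rule stepL[OF ih, where u = "mon (Suc (Suc n)) [X (Suc (Suc n)) (Suc (Suc j))]" and z = ?z]) (use Suc True in \<open>simp_all add: nf\<close>)
    also have "leib_eq \<dots> (fmul (R (Suc n) (Suc (Suc (Suc j)))) (mon n [D n i]))"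
      by (rule leib_eq_lc) (simp add: nf R_Suc[of "Suc n" "Suc (Suc j)"])
    finally show ?thesis .
  next
    case False
    then have i: "i = Suc j" and jn: "Suc j \<le> n" using Suc by auto
    let ?w = "mon n [D (Suc n) (Suc j), D n (Suc j)] :: 'k fl"
    have "leib_eq (fmul (mon (Suc n) [D (Suc n) (Suc j)]) (R n (Suc (Suc j))))
       (?w @ fmul (mon (Suc n) [X (Suc (Suc n)) (Suc (Suc j)), X (Suc (Suc n)) (Suc j), D (Suc n) (Suc (Suc j))]) (R n (Suc j)))"
      by (rule stepR[OF r_z2[of "Suc j" "Suc n"], where v = "R n (Suc j)" and z = ?w])
         (use jn in \<open>simp_all add: R_Suc[of n "Suc j"] nf\<close>)
    also have "leib_eq \<dots> (?w @ fmul (mon (Suc (Suc n)) [X (Suc (Suc n)) (Suc (Suc j)), X (Suc (Suc n)) (Suc j)]) (fmul (R (Suc n) (Suc j)) (mon n [D n (Suc j)])))"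
      by (rule stepL[OF lemD[of "Suc j" "Suc j" n], where u = "mon (Suc (Suc n)) [X (Suc (Suc n)) (Suc (Suc j)), X (Suc (Suc n)) (Suc j)]" and z = ?w])
         (use jn in \<open>simp_all add: nf\<close>)
    also have "leib_eq \<dots> ((mon n [D (Suc n) (Suc (Suc j)), D n (Suc j)] @ mon n [X (Suc (Suc n)) (Suc (Suc j)), D (Suc n) (Suc j), D n (Suc j)]) @ fmul (mon (Suc (Suc n)) [X (Suc (Suc n)) (Suc (Suc j)), X (Suc (Suc n)) (Suc j)]) (fmul (R (Suc n) (Suc j)) (mon n [D n (Suc j)])))"
      by (rule step0[OF leib_eq_sym[OF r_leib[of "Suc j" n]], where z = "fmul (mon (Suc (Suc n)) [X (Suc (Suc n)) (Suc (Suc j)), X (Suc (Suc n)) (Suc j)]) (fmul (R (Suc n) (Suc j)) (mon n [D n (Suc j)]))"])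
         (use jn in \<open>simp_all add: nf\<close>)
    also have "leib_eq \<dots> (fmul (R (Suc n) (Suc (Suc (Suc j)))) (mon n [D n (Suc j)]))"
      by (rule leib_eq_lc) (simp add: nf R_Suc[of "Suc n" "Suc (Suc j)"] R_Suc[of "Suc n" "Suc j"])
    finally show ?thesis using i by simp
  qed
qed

lemma lemMain: "i \<le> Suc j \<Longrightarrow> j \<le> n \<Longrightarrow>
  leib_eq (fmul (R (Suc n) i) (R n (Suc j))) (fmul (R (Suc n) (Suc (Suc j))) (R n i) :: 'k::field fl)"
proof (induction i)
  case 0 show ?case by simp
next
  case (Suc i)
  then have ij: "i \<le> j" and jn: "j \<le> n" by auto
  have ih: "leib_eq (fmul (R (Suc n) i) (R n (Suc j))) (fmul (R (Suc n) (Suc (Suc j))) (R n i) :: 'k fl)"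
    using Suc by simp
  let ?u = "mon (Suc (Suc n)) [X (Suc (Suc n)) i] :: 'k fl"
  have "leib_eq (fmul (R (Suc n) (Suc i)) (R n (Suc j)))
     (fmul (R (Suc n) (Suc (Suc j))) (mon n [D n i]) @ fmul ?u (fmul (R (Suc n) i) (R n (Suc j))))"
    by (rule step0[OF lemB[OF ij jn], where z = "fmul ?u (fmul (R (Suc n) i) (R n (Suc j)))"])
       (simp_all add: nf R_Suc[of "Suc n" i])
  also have "leib_eq \<dots> (fmul (R (Suc n) (Suc (Suc j))) (mon n [D n i]) @ fmul ?u (fmul (R (Suc n) (Suc (Suc j))) (R n i)))"
    by (rule stepL[OF ih, where u = ?u and z = "fmul (R (Suc n) (Suc (Suc j))) (mon n [D n i])"]) (use ij jn in \<open>simp_all add: nf\<close>)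
  also have "leib_eq \<dots> (fmul (R (Suc n) (Suc (Suc j))) (mon n [D n i]) @ fmul (R (Suc n) (Suc (Suc j))) (fmul (mon (Suc n) [X (Suc n) i]) (R n i)))"
    by (rule stepR[OF leib_eq_sym[OF lemC[of i "Suc j" "Suc n"]], where v = "R n i" and z = "fmul (R (Suc n) (Suc (Suc j))) (mon n [D n i])"])
       (use ij jn in \<open>simp_all add: nf\<close>)
  also have "leib_eq \<dots> (fmul (R (Suc n) (Suc (Suc j))) (R n (Suc i)))"
    by (rule leib_eq_lc) (simp add: nf R_Suc[of n i])
  finally show ?case .
qed

definition T :: "nat \<Rightarrow> nat \<Rightarrow> 'k::one fl" where
  "T n j = concat (map (\<lambda>a. mon n (map (X (Suc n)) (rev [a..<Suc j]) @ [D n (a - 1)])) [1..<Suc j])"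

lemma rho_T: "rho n j = mon n [D n j] @ T n j"
  by (simp add: rho_def T_def)

lemma fmul_mon_concat: "fmul (mon a ws) (concat xs) = concat (map (fmul (mon a ws)) (xs :: 'k::monoid_mult fl list))"
  by (induction xs) simp_all

lemma ptgt_XD: "ptgt (n, map (X (Suc n)) l @ [D n b]) = Suc n"
  by (cases l) auto

lemma T_Suc: "T n (Suc j) = fmul (mon (Suc n) [X (Suc n) (Suc j)]) (T n j) @ (mon n [X (Suc n) (Suc j), D n j] :: 'k::monoid_mult fl)"
proof -
  have "T n (Suc j) = concat (map (\<lambda>a. mon n (map (X (Suc n)) (rev [a..<Suc (Suc j)]) @ [D n (a - 1)])) [1..<Suc j])
      @ (mon n [X (Suc n) (Suc j), D n j] :: 'k fl)"
    by (simp add: T_def)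
  also have "concat (map (\<lambda>a. mon n (map (X (Suc n)) (rev [a..<Suc (Suc j)]) @ [D n (a - 1)])) [1..<Suc j])
     = (concat (map (\<lambda>a. fmul (mon (Suc n) [X (Suc n) (Suc j)]) (mon n (map (X (Suc n)) (rev [a..<Suc j]) @ [D n (a - 1)]))) [1..<Suc j]) :: 'k fl)"
  proof (rule arg_cong[where f = concat], rule map_cong[OF refl])
    fix a assume "a \<in> set [1..<Suc j]"
    then have "a \<le> Suc j" by auto
    then have "rev [a..<Suc (Suc j)] = Suc j # rev [a..<Suc j]" by simp
    then show "mon n (map (X (Suc n)) (rev [a..<Suc (Suc j)]) @ [D n (a - 1)]) =
      (fmul (mon (Suc n) [X (Suc n) (Suc j)]) (mon n (map (X (Suc n)) (rev [a..<Suc j]) @ [D n (a - 1)])) :: 'k fl)"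
      by (simp add: ptgt_XD)
  qed
  finally show ?thesis by (simp add: T_def fmul_mon_concat comp_def)
qed

lemma lc_rho_R: "lc (rho n j :: 'k::comm_semiring_1 fl) = lc (R n (Suc j))"
proof (induction j)
  case 0 then show ?case by (simp add: rho_T T_def R_Suc)
next
  case (Suc j)
  have "lc (fmul (mon (Suc n) [X (Suc n) (Suc j)]) (R n (Suc j)) :: 'k fl)
      = lc (fmul (mon (Suc n) [X (Suc n) (Suc j)]) (rho n j))"
    using lc_cong_left[OF Suc.IH[symmetric]] by simp
  then show ?case by (simp add: rho_T T_Suc R_Suc[of n "Suc j"] add_ac)
qed

theorem proposition3p9:
  fixes n i j :: nat
  assumes "i \<le> j" and "j \<le> n"
  shows "leib_eq (fmul (rho (Suc n) i) (rho n j) :: 'k::field fl)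
                 (fmul (rho (Suc n) (Suc j)) (rho n i))"
proof -
  have l: "lc (fmul (rho (Suc n) i) (rho n j) :: 'k fl) = lc (fmul (R (Suc n) (Suc i)) (R n (Suc j)))"
    using lc_cong_left[OF lc_rho_R[of n j], of "rho (Suc n) i"] lc_cong_right[OF lc_rho_R[of "Suc n" i], of "R n (Suc j)"] by (rule trans)
  have r: "lc (fmul (rho (Suc n) (Suc j)) (rho n i) :: 'k fl) = lc (fmul (R (Suc n) (Suc (Suc j))) (R n (Suc i)))"
    using lc_cong_left[OF lc_rho_R[of n i], of "rho (Suc n) (Suc j)"] lc_cong_right[OF lc_rho_R[of "Suc n" "Suc j"], of "R n (Suc i)"] by (rule trans)
  have "leib_eq (fmul (R (Suc n) (Suc i)) (R n (Suc j))) (fmul (R (Suc n) (Suc (Suc j))) (R n (Suc i)) :: 'k fl)"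
    using lemMain[of "Suc i" j n] assms by simp
  then show ?thesis using l r unfolding leib_eq_def by simp
qed


end
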